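(* Let $Y$ be a solid vector space, let $(X,d)$ be a complete cone metric space over $Y$, and let $D\subseteq X$ and $T\colon D\to X$ be a mapping satisfying: (a) $d(Tx,T^2x)\preceq \lambda\, d(x,Tx)$ for all $x\in D$ with $Tx\in D$, where $0\le\lambda<1$; (b) there is $x_0\in D$ such that $\overline U(x_0,r)\subseteq D$, where $r=\frac{1}{1-\lambda}\,d(x_0,Tx_0)$. Then: (i) The Picard iteration $x_{n+1}=Tx_n$ ($n=0,1,2,\dots$) starting from $x_0$ is well defined (i.e. $x_n\in D$ for all $n$), remains in the closed ball $\overline U(x_0,r)$ and converges to a point $\xi\in\overline U(x_0,r)$. (ii) $d(x_n,\xi)\preceq \frac{\lambda^n}{1-\lambda}\, d(x_0,Tx_0)$ for all $n\ge 0$. (iii) $d(x_n,\xi)\preceq\frac{1}{1-\lambda}\,d(x_n,x_{n+1})$ for all $n\ge0$, and $d(x_n,\xi)\preceq \frac{\lambda}{1-\lambda}\,d(x_n,x_{n-1})$ for all $n\ge 1$. (iv) If at least one of the following conditions holds, then $\xi$ is a fixed point of $T$: (F1) $T$ is continuous at $\xi$; (F2) $T$ has a closed graph, i.e. $\{(x,Tx):x\in D\}$ is a closed subset of $D\times X$.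
   Context: Vector space with convergence: a real vector space $Y$ with a relation $\to$ between sequences in $Y$ and points of $Y$ (write $x_n\to x$, $x$ is "a limit"; uniqueness of limits is not assumed) such that (C1) $x_n\to x$, $y_n\to y$ imply $x_n+y_n\to x+y$; (C2) $x_n\to x$, $\lambda\in\mathbb R$ imply $\lambda x_n\to\lambda x$; (C3) $\lambda_n\to\lambda$ in $\mathbb R$, $x\in Y$ imply $\lambda_n x\to\lambda x$. A set $A\subseteq Y$ is open if $x_n\to x\in A$ implies $x_n\in A$ for all but finitely many $n$; closed if $x_n\to x$ and $x_n\in A$ for all $n$ imply $x\in A$. The interior $A^\circ$ is the union of all open subsets of $A$. A cone is a nonempty closed $K\subseteq Y$ with $\lambda K\subseteq K$ ($\lambda\ge0$), $K+K\subseteq K$, $K\cap(-K)=\{0\}$; it is solid if $K\neq\{0\}$ and $K^\circ\ne\emptyset$. A vector ordering is a partial order $\preceq$ on $Y$ with (V1) $x\preceq y\Rightarrow x+z\preceq y+z$; (V2) $\lambda\ge0$, $x\preceq y\Rightarrow \lambda x\preceq\lambda y$; (V3) $x_n\to x$, $y_n\to y$, $x_n\preceq y_n$ for all $n$ $\Rightarrow x\preceq y$. A solid vector space is such a $(Y,\preceq,\to)$ whose positive cone $K=\{x:x\succeq0\}$ is solid, equipped with $x\prec y$ iff $y-x\in K^\circ$. Cone metric space over $Y$: a nonempty set $X$ with $d\colon X\times X\to Y$ such that $d(x,y)\succeq 0$, $d(x,y)=0$ iff $x=y$, $d(x,y)=d(y,x)$, and $d(x,y)\preceq d(x,z)+d(z,y)$.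 The open balls $U(x,r)=\{y\in X:d(y,x)\prec r\}$ ($r\succ0$) form a basis of a topology on $X$ (the cone metric topology), with which $X$ is endowed; thus $x_n\to x$ in $X$ iff for every $c\succ0$, $d(x_n,x)\prec c$ for all but finitely many $n$. Closed ball: $\overline U(x,r)=\{y\in X: d(y,x)\preceq r\}$ for $r\succeq0$. A sequence $(x_n)$ is Cauchy if for every $c\succ0$ there is $N$ with $d(x_n,x_m)\prec c$ for all $n,m>N$; $X$ is complete if every Cauchy sequence converges. Convention: $0^0=1$. *)

theory Defs
  imports Complex_Main
begin

definition vsc :: "((nat \<Rightarrow> 'y::real_vector) \<Rightarrow> 'y \<Rightarrow> bool) \<Rightarrow> bool" where
  "vsc cv \<longleftrightarrow>
     (\<forall>xs ys x y. cv xs x \<and> cv ys y \<longrightarrow> cv (\<lambda>n. xs n + ys n) (x + y)) \<and>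
     (\<forall>xs x (c::real). cv xs x \<longrightarrow> cv (\<lambda>n. c *\<^sub>R xs n) (c *\<^sub>R x)) \<and>
     (\<forall>(ls::nat \<Rightarrow> real) l x. ls \<longlonglongrightarrow> l \<longrightarrow> cv (\<lambda>n. ls n *\<^sub>R x) (l *\<^sub>R x))"

definition c_open :: "((nat \<Rightarrow> 'y::real_vector) \<Rightarrow> 'y \<Rightarrow> bool) \<Rightarrow> 'y set \<Rightarrow> bool" where
  "c_open cv A \<longleftrightarrow> (\<forall>xs x. cv xs x \<and> x \<in> A \<longrightarrow> (\<forall>\<^sub>F n in sequentially. xs n \<in> A))"

definition c_closed :: "((nat \<Rightarrow> 'y::real_vector) \<Rightarrow> 'y \<Rightarrow> bool) \<Rightarrow> 'y set \<Rightarrow> bool" where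
  "c_closed cv A \<longleftrightarrow> (\<forall>xs x. cv xs x \<and> (\<forall>n. xs n \<in> A) \<longrightarrow> x \<in> A)"

definition c_interior :: "((nat \<Rightarrow> 'y::real_vector) \<Rightarrow> 'y \<Rightarrow> bool) \<Rightarrow> 'y set \<Rightarrow> 'y set" where
  "c_interior cv A = \<Union>{U. U \<subseteq> A \<and> c_open cv U}"

definition c_cone :: "((nat \<Rightarrow> 'y::real_vector) \<Rightarrow> 'y \<Rightarrow> bool) \<Rightarrow> 'y set \<Rightarrow> bool" where
  "c_cone cv K \<longleftrightarrow> K \<noteq> {} \<and> c_closed cv K \<and>
     (\<forall>(c::real) x. c \<ge> 0 \<and> x \<in> K \<longrightarrow> c *\<^sub>R x \<in> K) \<and>
     (\<forall>x y. x \<in> K \<and> y \<in> K \<longrightarrow> x + y \<in> K) \<and>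
     K \<inter> uminus ` K = {0}"

definition c_solid_cone :: "((nat \<Rightarrow> 'y::real_vector) \<Rightarrow> 'y \<Rightarrow> bool) \<Rightarrow> 'y set \<Rightarrow> bool" where
  "c_solid_cone cv K \<longleftrightarrow> c_cone cv K \<and> K \<noteq> {0} \<and> c_interior cv K \<noteq> {}"

definition vector_ordering ::
  "((nat \<Rightarrow> 'y::real_vector) \<Rightarrow> 'y \<Rightarrow> bool) \<Rightarrow> ('y \<Rightarrow> 'y \<Rightarrow> bool) \<Rightarrow> bool" where
  "vector_ordering cv le \<longleftrightarrow>
     (\<forall>x. le x x) \<and> (\<forall>x y. le x y \<and> le y x \<longrightarrow> x = y) \<and>
     (\<forall>x y z. le x y \<and> le y z \<longrightarrow> le x z) \<and>
     (\<forall>x y z. le x y \<longrightarrow> le (x + z) (y + z)) \<and>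
     (\<forall>(c::real) x y. c \<ge> 0 \<and> le x y \<longrightarrow> le (c *\<^sub>R x) (c *\<^sub>R y)) \<and>
     (\<forall>xs ys x y. cv xs x \<and> cv ys y \<and> (\<forall>n. le (xs n) (ys n)) \<longrightarrow> le x y)"

definition solid_vector_space ::
  "((nat \<Rightarrow> 'y::real_vector) \<Rightarrow> 'y \<Rightarrow> bool) \<Rightarrow> ('y \<Rightarrow> 'y \<Rightarrow> bool) \<Rightarrow> bool" where
  "solid_vector_space cv le \<longleftrightarrow> vsc cv \<and> vector_ordering cv le \<and> c_solid_cone cv {x. le 0 x}"

definition sv_less ::
  "((nat \<Rightarrow> 'y::real_vector) \<Rightarrow> 'y \<Rightarrow> bool) \<Rightarrow> ('y \<Rightarrow> 'y \<Rightarrow> bool) \<Rightarrow> 'y \<Rightarrow> 'y \<Rightarrow> bool" where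
  "sv_less cv le x y \<longleftrightarrow> y - x \<in> c_interior cv {z. le 0 z}"

definition cone_metric_space ::
  "((nat \<Rightarrow> 'y::real_vector) \<Rightarrow> 'y \<Rightarrow> bool) \<Rightarrow> ('y \<Rightarrow> 'y \<Rightarrow> bool) \<Rightarrow> 'a set \<Rightarrow> ('a \<Rightarrow> 'a \<Rightarrow> 'y) \<Rightarrow> bool" where
  "cone_metric_space cv le X d \<longleftrightarrow> X \<noteq> {} \<and>
     (\<forall>x\<in>X. \<forall>y\<in>X. le 0 (d x y) \<and> (d x y = 0 \<longleftrightarrow> x = y) \<and> d x y = d y x \<and>
        (\<forall>z\<in>X. le (d x y) (d x z + d z y)))"

definition cm_ball ::
  "((nat \<Rightarrow> 'y::real_vector) \<Rightarrow> 'y \<Rightarrow> bool) \<Rightarrow> ('y \<Rightarrow> 'y \<Rightarrow> bool) \<Rightarrow> 'a set \<Rightarrow> ('a \<Rightarrow> 'a \<Rightarrow> 'y) \<Rightarrow> 'a \<Rightarrow> 'y \<Rightarrow> 'a set" where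
  "cm_ball cv le X d x r = {y \<in> X. sv_less cv le (d y x) r}"

definition cm_cball ::
  "('y::real_vector \<Rightarrow> 'y \<Rightarrow> bool) \<Rightarrow> 'a set \<Rightarrow> ('a \<Rightarrow> 'a \<Rightarrow> 'y) \<Rightarrow> 'a \<Rightarrow> 'y \<Rightarrow> 'a set" where
  "cm_cball le X d x r = {y \<in> X. le (d y x) r}"

definition cm_open ::
  "((nat \<Rightarrow> 'y::real_vector) \<Rightarrow> 'y \<Rightarrow> bool) \<Rightarrow> ('y \<Rightarrow> 'y \<Rightarrow> bool) \<Rightarrow> 'a set \<Rightarrow> ('a \<Rightarrow> 'a \<Rightarrow> 'y) \<Rightarrow> 'a set \<Rightarrow> bool" where
  "cm_open cv le X d U \<longleftrightarrow> U \<subseteq> X \<and>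
     (\<forall>x\<in>U. \<exists>y\<in>X. \<exists>r. sv_less cv le 0 r \<and> x \<in> cm_ball cv le X d y r \<and> cm_ball cv le X d y r \<subseteq> U)"

definition cm_tendsto ::
  "((nat \<Rightarrow> 'y::real_vector) \<Rightarrow> 'y \<Rightarrow> bool) \<Rightarrow> ('y \<Rightarrow> 'y \<Rightarrow> bool) \<Rightarrow> 'a set \<Rightarrow> ('a \<Rightarrow> 'a \<Rightarrow> 'y) \<Rightarrow> (nat \<Rightarrow> 'a) \<Rightarrow> 'a \<Rightarrow> bool" where
  "cm_tendsto cv le X d xs x \<longleftrightarrow> x \<in> X \<and> (\<forall>n. xs n \<in> X) \<and>
     (\<forall>c. sv_less cv le 0 c \<longrightarrow> (\<forall>\<^sub>F n in sequentially. sv_less cv le (d (xs n) x) c))"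

definition cm_Cauchy ::
  "((nat \<Rightarrow> 'y::real_vector) \<Rightarrow> 'y \<Rightarrow> bool) \<Rightarrow> ('y \<Rightarrow> 'y \<Rightarrow> bool) \<Rightarrow> 'a set \<Rightarrow> ('a \<Rightarrow> 'a \<Rightarrow> 'y) \<Rightarrow> (nat \<Rightarrow> 'a) \<Rightarrow> bool" where
  "cm_Cauchy cv le X d xs \<longleftrightarrow> (\<forall>n. xs n \<in> X) \<and>
     (\<forall>c. sv_less cv le 0 c \<longrightarrow> (\<exists>N. \<forall>n m. n > N \<and> m > N \<longrightarrow> sv_less cv le (d (xs n) (xs m)) c))"

definition cm_complete ::
  "((nat \<Rightarrow> 'y::real_vector) \<Rightarrow> 'y \<Rightarrow> bool) \<Rightarrow> ('y \<Rightarrow> 'y \<Rightarrow> bool) \<Rightarrow> 'a set \<Rightarrow> ('a \<Rightarrow> 'a \<Rightarrow> 'y) \<Rightarrow> bool" where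
  "cm_complete cv le X d \<longleftrightarrow> (\<forall>xs. cm_Cauchy cv le X d xs \<longrightarrow> (\<exists>x. cm_tendsto cv le X d xs x))"

definition cm_continuous_at ::
  "((nat \<Rightarrow> 'y::real_vector) \<Rightarrow> 'y \<Rightarrow> bool) \<Rightarrow> ('y \<Rightarrow> 'y \<Rightarrow> bool) \<Rightarrow> 'a set \<Rightarrow> ('a \<Rightarrow> 'a \<Rightarrow> 'y) \<Rightarrow> 'a set \<Rightarrow> ('a \<Rightarrow> 'a) \<Rightarrow> 'a \<Rightarrow> bool" where
  "cm_continuous_at cv le X d D T p \<longleftrightarrow>
     (\<forall>V. cm_open cv le X d V \<and> T p \<in> V \<longrightarrow>
        (\<exists>U. cm_open cv le X d U \<and> p \<in> U \<and> (\<forall>x \<in> U \<inter> D. T x \<in> V)))"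

text \<open>Closed graph: {(x, T x). x \<in> D} is closed in D \<times> X (product of subspace topology on D
  and the cone metric topology on X), i.e. its complement in D \<times> X is open there.\<close>
definition cm_closed_graph ::
  "((nat \<Rightarrow> 'y::real_vector) \<Rightarrow> 'y \<Rightarrow> bool) \<Rightarrow> ('y \<Rightarrow> 'y \<Rightarrow> bool) \<Rightarrow> 'a set \<Rightarrow> ('a \<Rightarrow> 'a \<Rightarrow> 'y) \<Rightarrow> 'a set \<Rightarrow> ('a \<Rightarrow> 'a) \<Rightarrow> bool" where
  "cm_closed_graph cv le X d D T \<longleftrightarrow>
     (\<forall>x\<in>D. \<forall>y\<in>X. y \<noteq> T x \<longrightarrow>
        (\<exists>U V. cm_open cv le X d U \<and> cm_open cv le X d V \<and> x \<in> U \<and> y \<in> V \<and>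
           (\<forall>x'\<in>U \<inter> D. \<forall>y'\<in>V. y' \<noteq> T x')))"

end

theory Submission
  imports Defs
begin

locale svs =
  fixes cv :: "(nat \<Rightarrow> 'y::real_vector) \<Rightarrow> 'y \<Rightarrow> bool" and le :: "'y \<Rightarrow> 'y \<Rightarrow> bool"
  assumes Y: "solid_vector_space cv le"
begin

abbreviation "Ki \<equiv> c_interior cv {z. le 0 z}"

lemma add_cv: "cv xs x \<Longrightarrow> cv ys y \<Longrightarrow> cv (\<lambda>n. xs n + ys n) (x+y)"
  using Y unfolding solid_vector_space_def vsc_def by blast
lemma scale_cv: "cv xs x \<Longrightarrow> cv (\<lambda>n. c *\<^sub>R xs n) (c *\<^sub>R x)"
  using Y unfolding solid_vector_space_def vsc_def by blast
lemma lim_cv: "ls \<longlonglongrightarrow> l \<Longrightarrow> cv (\<lambda>n. ls n *\<^sub>R x) (l *\<^sub>R x)"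
  using Y unfolding solid_vector_space_def vsc_def by blast
lemma const_cv: "cv (\<lambda>n. x) x"
  using lim_cv[of "\<lambda>n. 1" 1 x] by simp
lemma refl: "le x x"
  using Y unfolding solid_vector_space_def vector_ordering_def by blast
lemma antisym: "le x y \<Longrightarrow> le y x \<Longrightarrow> x = y"
  using Y unfolding solid_vector_space_def vector_ordering_def by blast
lemma le_tr: "le x y \<Longrightarrow> le y z \<Longrightarrow> le x z"
  using Y unfolding solid_vector_space_def vector_ordering_def by blast
lemma addR: "le x y \<Longrightarrow> le (x + z) (y + z)"
  using Y unfolding solid_vector_space_def vector_ordering_def by blast
lemma scal: "0 \<le> c \<Longrightarrow> le x y \<Longrightarrow> le (c *\<^sub>R x) (c *\<^sub>R y)"
  using Y unfolding solid_vector_space_def vector_ordering_def by blast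
lemma V3: "cv xs x \<Longrightarrow> cv ys y \<Longrightarrow> (\<And>n. le (xs n) (ys n)) \<Longrightarrow> le x y"
  using Y unfolding solid_vector_space_def vector_ordering_def by blast
lemma Ki_ne: "Ki \<noteq> {}"
  using Y unfolding solid_vector_space_def c_solid_cone_def by blast
lemma Ki_K: "z \<in> Ki \<Longrightarrow> le 0 z"
  unfolding c_interior_def by blast
lemma Ki_open: "c_open cv Ki"
  unfolding c_open_def
proof (intro allI impI)
  fix xs x assume h: "cv xs x \<and> x \<in> Ki"
  then obtain U where U: "x \<in> U" "U \<subseteq> {z. le 0 z}" "c_open cv U"
    unfolding c_interior_def by blast
  then have "\<forall>\<^sub>F n in sequentially. xs n \<in> U" using h unfolding c_open_def by blast
  then show "\<forall>\<^sub>F n in sequentially. xs n \<in> Ki"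
    by (rule eventually_mono) (use U in \<open>auto simp: c_interior_def\<close>)
qed

lemma le_diff: "le x y \<longleftrightarrow> le 0 (y - x)"
  using addR[of x y "-x"] addR[of 0 "y - x" x] by auto

lemma add_mono: "le a b \<Longrightarrow> le c e \<Longrightarrow> le (a+c) (b+e)"
  using addR[of a b c] addR[of c e b] le_tr by (simp add: add.commute)

lemma Ki_add: assumes a: "a \<in> Ki" and b: "le 0 b" shows "a + b \<in> Ki"
proof -
  let ?U = "(\<lambda>z. z + b) ` Ki"
  have "?U \<subseteq> {z. le 0 z}"
  proof
    fix w assume "w \<in> ?U"
    then obtain z where z: "z \<in> Ki" "w = z + b" by blast
    have "le 0 z" using Ki_K z by blast
    then have "le (0 + b) (z + b)" by (rule addR)
    then show "w \<in> {z. le 0 z}" using b le_tr z by auto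
  qed
  moreover have "c_open cv ?U"
    unfolding c_open_def
  proof (intro allI impI)
    fix xs x assume h: "cv xs x \<and> x \<in> ?U"
    then obtain z where z: "z \<in> Ki" "x = z + b" by blast
    have "cv (\<lambda>n. xs n + (-b)) (x + -b)" using h const_cv add_cv by blast
    then have "\<forall>\<^sub>F n in sequentially. xs n + -b \<in> Ki" using Ki_open z unfolding c_open_def by auto
    then show "\<forall>\<^sub>F n in sequentially. xs n \<in> ?U"
      by (rule eventually_mono) (metis add.commute add_minus_cancel image_eqI)
  qed
  moreover have "a + b \<in> ?U" using a by blast
  ultimately show ?thesis unfolding c_interior_def by blast
qed

lemma Ki_scale: assumes c: "0 < c" and a: "a \<in> Ki" shows "c *\<^sub>R a \<in> Ki"
proof -
  let ?U = "(\<lambda>z. c *\<^sub>R z) ` Ki"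
  have "?U \<subseteq> {z. le 0 z}"
  proof
    fix w assume "w \<in> ?U"
    then obtain z where z: "z \<in> Ki" "w = c *\<^sub>R z" by blast
    have "le 0 z" using Ki_K z by blast
    then have "le (c *\<^sub>R 0) (c *\<^sub>R z)" using c scal[of c 0 z] by simp
    then show "w \<in> {z. le 0 z}" using z by auto
  qed
  moreover have "c_open cv ?U"
    unfolding c_open_def
  proof (intro allI impI)
    fix xs x assume h: "cv xs x \<and> x \<in> ?U"
    then obtain z where z: "z \<in> Ki" "x = c *\<^sub>R z" by blast
    have "cv (\<lambda>n. (1/c) *\<^sub>R xs n) ((1/c) *\<^sub>R x)" using h scale_cv by blast
    moreover have "(1/c) *\<^sub>R x = z" using z c by simp
    ultimately have "\<forall>\<^sub>F n in sequentially. (1/c) *\<^sub>R xs n \<in> Ki" using Ki_open z unfolding c_open_def by auto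
    then show "\<forall>\<^sub>F n in sequentially. xs n \<in> ?U"
    proof (rule eventually_mono)
      fix n assume "(1/c) *\<^sub>R xs n \<in> Ki"
      moreover have "xs n = c *\<^sub>R ((1/c) *\<^sub>R xs n)" using c by simp
      ultimately show "xs n \<in> ?U" by blast
    qed
  qed
  moreover have "c *\<^sub>R a \<in> ?U" using a by blast
  ultimately show ?thesis unfolding c_interior_def by blast
qed

lemma Ki_pow: assumes a: "a \<in> Ki" and l: "0 \<le> lam" "lam < (1::real)"
  shows "\<forall>\<^sub>F n in sequentially. a - lam ^ n *\<^sub>R b \<in> Ki"
proof -
  have "(\<lambda>n. - (lam ^ n)) \<longlonglongrightarrow> - 0"
    by (intro tendsto_minus LIMSEQ_power_zero) (use l in auto)
  then have "cv (\<lambda>n. (- (lam ^ n)) *\<^sub>R b) ((- 0) *\<^sub>R b)" by (rule lim_cv)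
  then have "cv (\<lambda>n. a + (- (lam ^ n)) *\<^sub>R b) (a + (- 0) *\<^sub>R b)" using const_cv add_cv by blast
  then have "\<forall>\<^sub>F n in sequentially. a + (- (lam ^ n)) *\<^sub>R b \<in> Ki"
    using Ki_open a unfolding c_open_def by auto
  then show ?thesis by (rule eventually_mono) simp
qed

lemma le_lim: assumes h: "\<And>c. c \<in> Ki \<Longrightarrow> le a (b + c)" shows "le a b"
proof -
  obtain c0 where c0: "c0 \<in> Ki" using Ki_ne by blast
  have "cv (\<lambda>k. inverse (real (Suc k)) *\<^sub>R c0) (0 *\<^sub>R c0)"
    by (rule lim_cv[OF LIMSEQ_inverse_real_of_nat])
  then have "cv (\<lambda>k. b + inverse (real (Suc k)) *\<^sub>R c0) (b + 0 *\<^sub>R c0)" using const_cv add_cv by blast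
  then have "le a (b + 0 *\<^sub>R c0)"
    by (rule V3[OF const_cv]) (intro h Ki_scale c0, simp)
  then show ?thesis by simp
qed

lemma less_le_trans: "y - x \<in> Ki \<Longrightarrow> le y z \<Longrightarrow> z - x \<in> Ki"
  using Ki_add[of "y - x" "z - y"] le_diff by (simp add: algebra_simps)
lemma le_less_trans: "le x y \<Longrightarrow> z - y \<in> Ki \<Longrightarrow> z - x \<in> Ki"
  using Ki_add[of "z - y" "y - x"] le_diff by (simp add: algebra_simps)
lemma Ki_le: "z - y \<in> Ki \<Longrightarrow> le y z"
  using Ki_K le_diff by blast
lemma coef_mono: "le 0 e \<Longrightarrow> a \<le> b \<Longrightarrow> le (a *\<^sub>R e) (b *\<^sub>R e)"
  using scal[of "b - a" 0 e] le_diff by (simp add: algebra_simps)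

end

theorem theorem10p5:
  fixes cv :: "(nat \<Rightarrow> 'y::real_vector) \<Rightarrow> 'y \<Rightarrow> bool"
    and le :: "'y \<Rightarrow> 'y \<Rightarrow> bool"
    and X D :: "'a set" and d :: "'a \<Rightarrow> 'a \<Rightarrow> 'y" and T :: "'a \<Rightarrow> 'a"
    and lam :: real and x0 :: 'a
  assumes Y: "solid_vector_space cv le"
    and Xcm: "cone_metric_space cv le X d"
    and Xc: "cm_complete cv le X d"
    and DX: "D \<subseteq> X"
    and TD: "\<forall>x\<in>D. T x \<in> X"
    and lam: "0 \<le> lam" "lam < 1"
    and a: "\<forall>x\<in>D. T x \<in> D \<longrightarrow> le (d (T x) (T (T x))) (lam *\<^sub>R d x (T x))"
    and x0: "x0 \<in> D"
    and b: "cm_cball le X d x0 ((1 / (1 - lam)) *\<^sub>R d x0 (T x0)) \<subseteq> D"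
  shows "let r = (1 / (1 - lam)) *\<^sub>R d x0 (T x0); x = (\<lambda>n. (T ^^ n) x0) in
    (\<forall>n. x n \<in> D) \<and> (\<forall>n. x n \<in> cm_cball le X d x0 r) \<and>
    (\<exists>\<xi> \<in> cm_cball le X d x0 r.
       cm_tendsto cv le X d x \<xi> \<and>
       (\<forall>n. le (d (x n) \<xi>) ((lam ^ n / (1 - lam)) *\<^sub>R d x0 (T x0))) \<and>
       (\<forall>n. le (d (x n) \<xi>) ((1 / (1 - lam)) *\<^sub>R d (x n) (x (Suc n)))) \<and>
       (\<forall>n\<ge>1. le (d (x n) \<xi>) ((lam / (1 - lam)) *\<^sub>R d (x n) (x (n - 1)))) \<and>
       ((cm_continuous_at cv le X d D T \<xi> \<or> cm_closed_graph cv le X d D T) \<longrightarrow> T \<xi> = \<xi>))"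
proof -
  interpret svs cv le using Y by unfold_locales
  note [trans] = le_tr
  define x where "x = (\<lambda>n. (T ^^ n) x0)"
  define r where "r = (1 / (1 - lam)) *\<^sub>R d x0 (T x0)"
  define e where "e = (\<lambda>n. d (x n) (x (Suc n)))"
  have xS: "x (Suc n) = T (x n)" for n unfolding x_def by simp
  have x0e: "x 0 = x0" unfolding x_def by simp
  have dpos: "le 0 (d p q)" if "p \<in> X" "q \<in> X" for p q using Xcm that unfolding cone_metric_space_def by blast
  have dzero: "d p q = 0 \<longleftrightarrow> p = q" if "p \<in> X" "q \<in> X" for p q using Xcm that unfolding cone_metric_space_def by blast
  have dsym: "d p q = d q p" if "p \<in> X" "q \<in> X" for p q using Xcm that unfolding cone_metric_space_def by blast
  have dtri: "le (d p q) (d p z + d z q)" if "p \<in> X" "q \<in> X" "z \<in> X" for p q z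
    using Xcm that unfolding cone_metric_space_def by blast
  have l1: "0 < 1 - lam" using lam by simp
  have e0: "e 0 = d x0 (T x0)" unfolding e_def using xS x0e by simp
  have x1X: "T x0 \<in> X" using TD x0 by blast
  have e0pos: "le 0 (e 0)" using dpos[OF _ x1X] x0 DX e0 by auto
  have Q: "x n \<in> D \<and> le (e n) (lam ^ n *\<^sub>R e 0) \<and>
      le (d x0 (x (Suc n))) (((1 - lam ^ Suc n) / (1 - lam)) *\<^sub>R e 0)" for n
  proof (induction n)
    case 0
    then show ?case using x0 x0e refl l1 e0 xS by (simp add: e_def)
  next
    case (Suc n)
    have xnD: "x n \<in> D" using Suc by blast
    have x1X: "x (Suc n) \<in> X" using xS TD xnD by simp
    have "le (d x0 (x (Suc n))) (((1 - lam ^ Suc n) / (1 - lam)) *\<^sub>R e 0)" using Suc by blast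
    also have "le \<dots> r" unfolding r_def e0[symmetric]
      by (rule coef_mono[OF e0pos]) (use lam l1 in \<open>auto simp: divide_simps\<close>)
    finally have "le (d (x (Suc n)) x0) r" using le_tr dsym x1X x0 DX by (metis subsetD)
    then have xSD: "x (Suc n) \<in> D" using b x1X unfolding cm_cball_def r_def by blast
    have "le (e (Suc n)) (lam *\<^sub>R e n)" using a xnD xSD xS unfolding e_def by metis
    also have "le \<dots> (lam *\<^sub>R (lam ^ n *\<^sub>R e 0))" using scal lam Suc by blast
    finally have eS: "le (e (Suc n)) (lam ^ Suc n *\<^sub>R e 0)" using le_tr by simp
    have x2X: "x (Suc (Suc n)) \<in> X" using xS TD xSD by simp
    have "le (d x0 (x (Suc (Suc n)))) (d x0 (x (Suc n)) + e (Suc n))"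
      unfolding e_def using dtri x0 DX x1X x2X by blast
    also have "le \<dots> (((1 - lam ^ Suc n) / (1 - lam)) *\<^sub>R e 0 + lam ^ Suc n *\<^sub>R e 0)"
      using add_mono Suc eS by blast
    also have "\<dots> = ((1 - lam ^ Suc (Suc n)) / (1 - lam)) *\<^sub>R e 0"
      unfolding scaleR_left_distrib[symmetric] using l1 by (simp add: field_simps)
    finally show ?case using xSD eS le_tr by blast
  qed
  have xD: "x n \<in> D" for n using Q by blast
  have xX: "x n \<in> X" for n using xD DX by blast
  have epos: "le 0 (e n)" for n unfolding e_def using dpos xX by blast
  have estep: "le (e (Suc n)) (lam *\<^sub>R e n)" for n using a xD xS unfolding e_def by metis
  have epow: "le (e (n + j)) (lam ^ j *\<^sub>R e n)" for n j
  proof (induction j)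
    case 0 then show ?case using refl by simp
  next
    case (Suc j)
    have "le (e (n + Suc j)) (lam *\<^sub>R e (n + j))" using estep by simp
    also have "le \<dots> (lam *\<^sub>R (lam ^ j *\<^sub>R e n))" using scal lam Suc by blast
    finally show ?case using le_tr by simp
  qed
  have dnj: "le (d (x n) (x (n + j))) (((1 - lam ^ j) / (1 - lam)) *\<^sub>R e n)" for n j
  proof (induction j)
    case 0 have "d (x n) (x n) = 0" using dzero xX by blast
    then show ?case using refl by simp
  next
    case (Suc j)
    have "le (d (x n) (x (n + Suc j))) (d (x n) (x (n + j)) + e (n + j))"
      unfolding e_def using dtri xX by simp
    also have "le \<dots> (((1 - lam ^ j) / (1 - lam)) *\<^sub>R e n + lam ^ j *\<^sub>R e n)"
      using add_mono Suc epow by blast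
    also have "\<dots> = ((1 - lam ^ Suc j) / (1 - lam)) *\<^sub>R e n"
      unfolding scaleR_left_distrib[symmetric] using l1 by (simp add: field_simps)
    finally show ?case using le_tr by blast
  qed
  have dnj2: "le (d (x n) (x (n + j))) ((1 / (1 - lam)) *\<^sub>R e n)" for n j
  proof -
    have "le (((1 - lam ^ j) / (1 - lam)) *\<^sub>R e n) ((1 / (1 - lam)) *\<^sub>R e n)"
      by (rule coef_mono[OF epos]) (use lam l1 in \<open>auto simp: divide_simps\<close>)
    then show ?thesis using dnj le_tr by blast
  qed
  have en: "le (e n) (lam ^ n *\<^sub>R e 0)" for n using epow[of 0 n] by simp
  have dnj3: "le (d (x n) (x (n + j))) ((lam ^ n / (1 - lam)) *\<^sub>R e 0)" for n j
  proof -
    have "le ((1 / (1 - lam)) *\<^sub>R e n) ((1 / (1 - lam)) *\<^sub>R (lam ^ n *\<^sub>R e 0))"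
      by (rule scal) (use en l1 in auto)
    then have "le ((1 / (1 - lam)) *\<^sub>R e n) ((lam ^ n / (1 - lam)) *\<^sub>R e 0)" by simp
    then show ?thesis by (rule le_tr[OF dnj2])
  qed
  have cauchy: "cm_Cauchy cv le X d x"
    unfolding cm_Cauchy_def
  proof (intro conjI allI impI)
    fix n show "x n \<in> X" by (rule xX)
  next
    fix c assume "sv_less cv le 0 c"
    then have c: "c \<in> Ki" unfolding sv_less_def by simp
    obtain N0 where N0: "\<And>n. n \<ge> N0 \<Longrightarrow> c - lam ^ n *\<^sub>R ((1 / (1 - lam)) *\<^sub>R e 0) \<in> Ki"
      using Ki_pow[OF c lam, of "(1 / (1 - lam)) *\<^sub>R e 0"] unfolding eventually_sequentially by blast
    define N where "N = N0"
    have N: "c - lam ^ N *\<^sub>R ((1 / (1 - lam)) *\<^sub>R e 0) \<in> Ki" using N0 N_def by blast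
    have main: "c - d (x n) (x m) \<in> Ki" if nm1: "N \<le> n" and nm2: "n \<le> m" for n m
    proof -
      obtain j where m: "m = n + j" using nm2 le_Suc_ex by blast
      have "lam ^ n \<le> lam ^ N" using nm1 lam by (intro power_decreasing) auto
      then have "le ((lam ^ n / (1 - lam)) *\<^sub>R e 0) ((lam ^ N / (1 - lam)) *\<^sub>R e 0)"
        by (intro coef_mono[OF epos]) (use l1 in \<open>simp add: divide_right_mono\<close>)
      then have "le (d (x n) (x m)) ((lam ^ N / (1 - lam)) *\<^sub>R e 0)"
        using le_tr[OF dnj3[of n j]] m by simp
      then have "le (d (x n) (x m)) (lam ^ N *\<^sub>R ((1 / (1 - lam)) *\<^sub>R e 0))"
        by simp
      then show ?thesis by (rule le_less_trans[OF _ N])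
    qed
    show "\<exists>N. \<forall>n m. N < n \<and> N < m \<longrightarrow> sv_less cv le (d (x n) (x m)) c"
    proof (intro exI allI impI)
      fix n m assume "N < n \<and> N < m"
      then have nm: "N \<le> n" "N \<le> m" by auto
      show "sv_less cv le (d (x n) (x m)) c" unfolding sv_less_def
      proof (cases "n \<le> m")
        case True then show "c - d (x n) (x m) \<in> Ki" using main nm by blast
      next
        case False
        then have "c - d (x m) (x n) \<in> Ki" using main nm by simp
        then show "c - d (x n) (x m) \<in> Ki" using dsym[OF xX xX, of n m] by simp
      qed
    qed
  qed
  then obtain \<xi> where xi: "cm_tendsto cv le X d x \<xi>" using Xc unfolding cm_complete_def by blast
  have xiX: "\<xi> \<in> X" using xi unfolding cm_tendsto_def by blast
  have conv: "\<forall>\<^sub>F n in sequentially. d (x n) \<xi> \<in> (\<lambda>z. c - z) -` Ki" if "c \<in> Ki" for c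
    using xi that unfolding cm_tendsto_def sv_less_def by simp
  have iii: "le (d (x n) \<xi>) ((1 / (1 - lam)) *\<^sub>R e n)" for n
  proof (rule le_lim)
    fix c assume c: "c \<in> Ki"
    obtain M where M: "\<And>m. m \<ge> M \<Longrightarrow> c - d (x m) \<xi> \<in> Ki"
      using conv[OF c] unfolding eventually_sequentially by auto
    have "le (d (x n) \<xi>) (d (x n) (x (n + M)) + d (x (n + M)) \<xi>)" using dtri xX xiX by blast
    also have "le \<dots> ((1 / (1 - lam)) *\<^sub>R e n + c)"
      using add_mono[OF dnj2 Ki_le[OF M]] by simp
    finally show "le (d (x n) \<xi>) ((1 / (1 - lam)) *\<^sub>R e n + c)" .
  qed
  have ii: "le (d (x n) \<xi>) ((lam ^ n / (1 - lam)) *\<^sub>R d x0 (T x0))" for n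
  proof -
    have "le ((1 / (1 - lam)) *\<^sub>R e n) ((1 / (1 - lam)) *\<^sub>R (lam ^ n *\<^sub>R e 0))"
      by (rule scal) (use en l1 in auto)
    then have "le ((1 / (1 - lam)) *\<^sub>R e n) ((lam ^ n / (1 - lam)) *\<^sub>R d x0 (T x0))" using e0 by simp
    then show ?thesis by (rule le_tr[OF iii])
  qed
  have iii2: "le (d (x n) \<xi>) ((lam / (1 - lam)) *\<^sub>R d (x n) (x (n - 1)))" if n1: "n \<ge> 1" for n
  proof -
    obtain k where k: "n = Suc k" using n1 by (cases n) auto
    have "le ((1 / (1 - lam)) *\<^sub>R e n) ((1 / (1 - lam)) *\<^sub>R (lam *\<^sub>R e k))"
      by (rule scal) (use estep l1 k in auto)
    moreover have "e k = d (x n) (x (n - 1))" unfolding e_def using k dsym xX by simp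
    ultimately have "le ((1 / (1 - lam)) *\<^sub>R e n) ((lam / (1 - lam)) *\<^sub>R d (x n) (x (n - 1)))" by simp
    then show ?thesis by (rule le_tr[OF iii])
  qed
  have xiball: "\<xi> \<in> cm_cball le X d x0 r"
    unfolding cm_cball_def r_def using ii[of 0] xiX x0e dsym[OF xiX, of x0] x0 DX by auto
  have xballs: "x n \<in> cm_cball le X d x0 r" for n
  proof (cases n)
    case 0
    have "le (0 *\<^sub>R e 0) r" unfolding r_def e0[symmetric]
      by (rule coef_mono[OF e0pos]) (use l1 in simp)
    moreover have "d x0 x0 = 0" using dzero x0 DX by blast
    ultimately show ?thesis using 0 x0e xX[of n] unfolding cm_cball_def by simp
  next
    case (Suc k)
    have "le (d x0 (x (Suc k))) (((1 - lam ^ Suc k) / (1 - lam)) *\<^sub>R e 0)" using Q by blast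
    also have "le \<dots> r" unfolding r_def e0[symmetric]
      by (rule coef_mono[OF e0pos]) (use lam l1 in \<open>auto simp: divide_simps\<close>)
    finally have h: "le (d x0 (x (Suc k))) r" .
    have "d (x (Suc k)) x0 = d x0 (x (Suc k))" using dsym xX x0 DX by blast
    then show ?thesis using h Suc xX[of n] unfolding cm_cball_def by simp
  qed
  have ev_open: "\<forall>\<^sub>F n in sequentially. x n \<in> U" if U: "cm_open cv le X d U" "\<xi> \<in> U" for U
  proof -
    obtain y rr where y: "y \<in> X" "\<xi> \<in> cm_ball cv le X d y rr" "cm_ball cv le X d y rr \<subseteq> U"
      using U unfolding cm_open_def by blast
    have c: "rr - d \<xi> y \<in> Ki" using y unfolding cm_ball_def sv_less_def by blast
    show ?thesis using conv[OF c]
    proof (rule eventually_mono)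
      fix n assume "d (x n) \<xi> \<in> (\<lambda>z. rr - d \<xi> y - z) -` Ki"
      then have h: "(rr - d \<xi> y) - d (x n) \<xi> \<in> Ki" by simp
      have "le (d (x n) y) (d (x n) \<xi> + d \<xi> y)" using dtri xX xiX y by blast
      then have "rr - d (x n) y \<in> Ki"
        using le_less_trans[of "d (x n) y" "d (x n) \<xi> + d \<xi> y" rr] h by (simp add: algebra_simps)
      then show "x n \<in> U" using y xX unfolding cm_ball_def sv_less_def by auto
    qed
  qed
  have xiD: "\<xi> \<in> D" using xiball b r_def by blast
  have TX: "T \<xi> \<in> X" using TD xiD by blast
  have iv1: "T \<xi> = \<xi>" if F1: "cm_continuous_at cv le X d D T \<xi>"
  proof -
    have key: "le (d \<xi> (T \<xi>)) (0 + c)" if c: "c \<in> Ki" for c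
    proof -
      have c2: "(1/2) *\<^sub>R c \<in> Ki" using Ki_scale c by simp
      let ?V = "cm_ball cv le X d (T \<xi>) ((1/2) *\<^sub>R c)"
      have Vo: "cm_open cv le X d ?V" unfolding cm_open_def
      proof (intro conjI ballI)
        show "?V \<subseteq> X" unfolding cm_ball_def by blast
        fix z assume "z \<in> ?V"
        then show "\<exists>y\<in>X. \<exists>r. sv_less cv le 0 r \<and> z \<in> cm_ball cv le X d y r \<and> cm_ball cv le X d y r \<subseteq> ?V"
          using TX c2 unfolding sv_less_def by auto
      qed
      have "T \<xi> \<in> ?V" using TX c2 dzero[OF TX TX] unfolding cm_ball_def sv_less_def by simp
      then obtain U where U: "cm_open cv le X d U" "\<xi> \<in> U" "\<forall>z \<in> U \<inter> D. T z \<in> ?V"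
        using F1 Vo unfolding cm_continuous_at_def by blast
      obtain N1 where N1: "\<And>n. n \<ge> N1 \<Longrightarrow> x n \<in> U"
        using ev_open[OF U(1,2)] unfolding eventually_sequentially by blast
      obtain N2 where N2: "\<And>n. n \<ge> N2 \<Longrightarrow> d (x n) \<xi> \<in> (\<lambda>z. (1/2) *\<^sub>R c - z) -` Ki"
        using conv[OF c2] unfolding eventually_sequentially by blast
      define n where "n = N1 + N2"
      have "x n \<in> U \<inter> D" using N1 xD n_def by simp
      then have "x (Suc n) \<in> ?V" using U(3) xS by simp
      then have h1: "le (d (x (Suc n)) (T \<xi>)) ((1/2) *\<^sub>R c)"
        unfolding cm_ball_def sv_less_def using Ki_le by blast
      have "(1/2) *\<^sub>R c - d (x (Suc n)) \<xi> \<in> Ki" using N2[of "Suc n"] n_def by simp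
      then have h2: "le (d \<xi> (x (Suc n))) ((1/2) *\<^sub>R c)"
        using Ki_le dsym[OF xiX xX] by metis
      have "le (d \<xi> (T \<xi>)) (d \<xi> (x (Suc n)) + d (x (Suc n)) (T \<xi>))" using dtri xiX TX xX by blast
      also have "le \<dots> ((1/2) *\<^sub>R c + (1/2) *\<^sub>R c)" by (rule add_mono[OF h2 h1])
      also have "\<dots> = 0 + c" unfolding scaleR_left_distrib[symmetric] by simp
      finally show ?thesis .
    qed
    have "le (d \<xi> (T \<xi>)) 0" by (rule le_lim) (rule key)
    then have "d \<xi> (T \<xi>) = 0" using antisym dpos[OF xiX TX] by blast
    then show ?thesis using dzero[OF xiX TX] by simp
  qed
  have iv2: "T \<xi> = \<xi>" if F2: "cm_closed_graph cv le X d D T"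
  proof (rule ccontr)
    assume ne: "T \<xi> \<noteq> \<xi>"
    obtain U V where UV: "cm_open cv le X d U" "cm_open cv le X d V" "\<xi> \<in> U" "\<xi> \<in> V"
        "\<forall>x'\<in>U \<inter> D. \<forall>y'\<in>V. y' \<noteq> T x'"
      using F2 xiD xiX ne unfolding cm_closed_graph_def by metis
    obtain N1 where N1: "\<And>n. n \<ge> N1 \<Longrightarrow> x n \<in> U"
      using ev_open[OF UV(1,3)] unfolding eventually_sequentially by blast
    obtain N2 where N2: "\<And>n. n \<ge> N2 \<Longrightarrow> x n \<in> V"
      using ev_open[OF UV(2,4)] unfolding eventually_sequentially by blast
    define n where "n = N1 + N2"
    have "x n \<in> U \<inter> D" using N1 xD n_def by simp
    moreover have "x (Suc n) \<in> V" using N2 n_def by simp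
    ultimately show False using UV(5) xS by blast
  qed
  have iv: "T \<xi> = \<xi>" if "cm_continuous_at cv le X d D T \<xi> \<or> cm_closed_graph cv le X d D T"
    using that iv1 iv2 by blast
  show ?thesis unfolding Let_def r_def[symmetric] x_def[symmetric]
    using xD xballs xiball xi ii iii iii2 iv unfolding e_def by blast
qed

end
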